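(* There exists $\varphi_0>\frac{2\pi}{3}$ such that for every $s\in\mathbb C\setminus\{0\}$ with $|\arg s|<\varphi_0$ there exists $\sigma>0$ with $s\in\Omega_\sigma$.
   Context: For $\sigma>0$: $\Omega^1_\sigma=\{s:\Re s\le0,\ \sigma<|\Im s|\}\cup\{s:\Re s>0,\ \sigma<|s|\}$; $\Omega^2_\sigma=\{s:\ \sigma<|s|+\Re s,\ \sigma>\frac{-\Re(s)|s|}{2(|s|+\Re s)}\}$; $\Omega^3_\sigma=\{s\neq0:\ \sigma(|s|-\sigma+\Re s)-(\sigma(1+\frac{\Re s}{|s|})+\frac12\Re s)^2>0\}$; $\Omega_\sigma=\Omega^1_\sigma\cap(\Omega^2_\sigma\cup\Omega^3_\sigma)$. *)

theory Defs
  imports "HOL-Complex_Analysis.Complex_Analysis"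
begin

definition Omega1 :: "real \<Rightarrow> complex set" where
  "Omega1 \<sigma> = {s. Re s \<le> 0 \<and> \<sigma> < \<bar>Im s\<bar>} \<union> {s. Re s > 0 \<and> \<sigma> < cmod s}"

definition Omega2 :: "real \<Rightarrow> complex set" where
  "Omega2 \<sigma> = {s. \<sigma> < cmod s + Re s \<and> \<sigma> > - Re s * cmod s / (2 * (cmod s + Re s))}"

definition Omega3 :: "real \<Rightarrow> complex set" where
  "Omega3 \<sigma> = {s. s \<noteq> 0 \<and>
     \<sigma> * (cmod s - \<sigma> + Re s) - (\<sigma> * (1 + Re s / cmod s) + Re s / 2)^2 > 0}"

definition Omega :: "real \<Rightarrow> complex set" where
  "Omega \<sigma> = Omega1 \<sigma> \<inter> (Omega2 \<sigma> \<union> Omega3 \<sigma>)"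

end

theory Submission
  imports Defs
begin

lemma arccos_mhalf: "arccos (-1/2) = 2*pi/3"
proof -
  have "cos (2*pi/3) = -1/2"
  proof -
    have "cos (2*pi/3) = cos (pi - pi/3)" by (simp add: field_simps)
    also have "\<dots> = - cos (pi/3)" by (rule cos_pi_minus)
    finally show ?thesis by (simp add: cos_60)
  qed
  moreover have "arccos (cos (2*pi/3)) = 2*pi/3"
    by (rule arccos_cos) (use pi_gt_zero in auto)
  ultimately show ?thesis by simp
qed

lemma poly_pos: fixes c :: real assumes "c > -11/20" "c \<le> 0"
  shows "0.12 - 0.18*c - 0.64*c^2 > 0"
proof -
  have "c^2 \<le> (11/20)^2" using assms by (simp add: abs_le_square_iff[symmetric]) 
  have "(c + 11/20) * (16*c - 43/10) \<le> 0"
    using assms by (intro mult_nonneg_nonpos) auto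
  thus ?thesis by (simp add: algebra_simps power2_eq_square)
qed

theorem mainTheorem10:
  shows "\<exists>\<phi>0 > 2 * pi / 3. \<forall>s::complex. s \<noteq> 0 \<and> \<bar>Arg s\<bar> < \<phi>0 \<longrightarrow>
           (\<exists>\<sigma>>0. s \<in> Omega \<sigma>)"
proof -
  have B: "2*pi/3 < arccos (-11/20)"
    using arccos_less_arccos[of "-11/20" "-1/2"] arccos_mhalf by simp
  have M: "\<exists>\<sigma>>0. s \<in> Omega \<sigma>" if H: "s \<noteq> 0 \<and> \<bar>Arg s\<bar> < arccos (-11/20)" for s :: complex
  proof -
  define r where "r = cmod s"
  define x where "x = Re s"
  define y where "y = Im s"
  have r0: "r > 0" using H by (simp add: r_def)
  have ry: "r^2 = x^2 + y^2" unfolding r_def x_def y_def by (simp add: cmod_power2)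
  have "cos (arccos (-11/20)) < cos \<bar>Arg s\<bar>"
    using H Arg_bounded[of s] arccos_ubound[of "-11/20"] arccos_lbound[of "-11/20"]
    by (subst cos_mono_less_eq) auto
  hence "-11/20 < Re s / cmod s" using H cos_Arg[of s] by simp
  hence cx: "-11/20 < x / r" by (simp add: x_def r_def)
  define c where "c = x / r"
  have xc: "x = c * r" using r0 by (simp add: c_def)
  show "\<exists>\<sigma>>0. s \<in> Omega \<sigma>"
  proof (intro exI[of _ "3/10 * r"] conjI)
    show "3/10*r > 0" using r0 by simp
    have O1: "s \<in> Omega1 (3/10*r)"
    proof (cases "x \<le> 0")
      case True
      have xl: "-x \<le> 11/20*r" using cx r0 by (simp add: field_simps)
      have "(-x)^2 \<le> (11/20*r)^2" using True xl by (intro power_mono) auto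
      hence "x^2 \<le> (11/20*r)^2" by simp
      moreover have "r*r > 0" "x*x \<ge> 0" using r0 by auto
      ultimately have "(3/10*r)^2 < y^2" using ry by (simp add: power2_eq_square)
      hence "3/10*r < \<bar>y\<bar>" using r0 by (metis abs_ge_zero power2_abs power2_less_imp_less)
      thus ?thesis using True unfolding Omega1_def x_def y_def by simp
    next
      case False
      thus ?thesis using r0 unfolding Omega1_def x_def r_def by simp
    qed
    have O23: "s \<in> Omega2 (3/10*r) \<union> Omega3 (3/10*r)"
    proof (cases "x \<ge> 0")
      case True
      have "- x * r / (2 * (r + x)) \<le> 0" using True r0
        by (simp add: divide_nonpos_pos)
      moreover have "3/10*r < r + x" using True r0 by simp
      ultimately have "s \<in> Omega2 (3/10*r)" using r0 unfolding Omega2_def mem_Collect_eq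
        x_def[symmetric] r_def[symmetric] by linarith
      thus ?thesis by simp
    next
      case False
      have cneg: "c \<le> 0" using False r0 by (simp add: c_def divide_nonpos_pos)
      have eq: "3/10*r * (r - 3/10*r + x) - (3/10*r * (1 + x / r) + x / 2)^2
           = r^2 * (0.12 - 0.18*c - 0.64*c^2)"
        using r0 unfolding xc by (simp add: field_simps power2_eq_square)
      have "r^2 * (0.12 - 0.18*c - 0.64*c^2) > 0"
        using poly_pos[of c] cx cneg r0 by (simp add: c_def)
      hence "s \<in> Omega3 (3/10*r)" using H eq unfolding Omega3_def
        by (simp add: x_def[symmetric] r_def[symmetric])
      thus ?thesis by simp
    qed
    show "s \<in> Omega (3/10*r)" using O1 O23 unfolding Omega_def by simp
  qed
  qed
  show ?thesis using B M by blast
qed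

end
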